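(* Consider the multi-hop multi-channel network and Algorithm 1 described in the context, with parameter $\Delta_{est}\ge\Delta$, and assume $\delta\le\frac17$. Let $0<\epsilon<1$. Let $T_s$ be the time by which all nodes have started, and let $T_f$ be the earliest time by which each node has executed at least $\frac{48\max(2S,3\Delta_{est})}{\rho}\ln\!\left(\frac{N^2}{\epsilon}\right)$ full frames since $T_s$. Then with probability at least $1-\epsilon$, by time $T_f$ every node has discovered all its neighbors on all channels (i.e., for every link $v\to u$, $u$ has received a message from $v$).
   Context: Network: a finite set of $N$ nodes; each node $u$ has a nonempty available channel set $A_u$; $S=\max_u|A_u|$. Neighborhood on a channel is symmetric; all channels have identical propagation characteristics, so $u,v$ are neighbors on $c$ iff they are neighbors on some channel and $c\in A_u\cap A_v$. $\deg(u,c)$ is the number of neighbors of $u$ on $c$; $\Delta=\max_u\max_{c\in A_u}\deg(u,c)$. Each ordered pair of neighbors $(v,u)$ gives a link $v\to u$ with span $A_u\cap A_v$ and span-ratio $|A_u\cap A_v|/|A_u|$; $\rho$ is the minimum span-ratio over all links. A node operates on one channel at a time and cannot transmit and receive simultaneously; a node listening on $c$ throughout a real-time interval $I$ receives a message transmitted on $c$ during $I$ by a neighbor $v$ provided no other neighbor of it on $c$ transmits on $c$ at any time during $I$; no collision detection. Clocks: node $u$ has clock $C_u$ with $(1-\delta)\Delta t\le C_u(t+\Delta t)-C_u(t)\le(1+\delta)\Delta t$ for all real $t$, $\Delta t\ge0$; arbitrary offsets. Algorithm 1 (input: positive integer $\Delta_{est}$, an upper bound on $\Delta$ known to all nodes):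 each node starts at an arbitrary real time and partitions local time into consecutive frames of local length $L$, each split into three slots of local length $L/3$. At the start of each frame node $u$ picks $c$ uniformly at random from $A_u$; with probability $\min(\frac12,\frac{|A_u|}{3\Delta_{est}})$ it transmits on $c$ during each of the three slots a message with its identity and $A_u$, and otherwise listens on $c$ during the whole frame, recording each sender $v$ (with set $A$) as a neighbor with common channels $A\cap A_u$. Random choices are independent across frames and nodes. A full frame since $T_s$ is a frame starting at or after $T_s$. *)

theory Defs
  imports "HOL-Probability.Probability"
begin

definition nbr_on :: "('n \<Rightarrow> 'n \<Rightarrow> bool) \<Rightarrow> ('n \<Rightarrow> 'c set) \<Rightarrow> 'n \<Rightarrow> 'n \<Rightarrow> 'c \<Rightarrow> bool" where
  "nbr_on E A u v c \<longleftrightarrow> E u v \<and> c \<in> A u \<and> c \<in> A v"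

definition deg :: "'n set \<Rightarrow> ('n \<Rightarrow> 'n \<Rightarrow> bool) \<Rightarrow> ('n \<Rightarrow> 'c set) \<Rightarrow> 'n \<Rightarrow> 'c \<Rightarrow> nat" where
  "deg V E A u c = card {v \<in> V. nbr_on E A u v c}"

definition max_deg :: "'n set \<Rightarrow> ('n \<Rightarrow> 'n \<Rightarrow> bool) \<Rightarrow> ('n \<Rightarrow> 'c set) \<Rightarrow> nat" where
  "max_deg V E A = Max {deg V E A u c | u c. u \<in> V \<and> c \<in> A u}"

definition max_chan :: "'n set \<Rightarrow> ('n \<Rightarrow> 'c set) \<Rightarrow> nat" where
  "max_chan V A = Max ((\<lambda>u. card (A u)) ` V)"

definition min_span_ratio :: "'n set \<Rightarrow> ('n \<Rightarrow> 'n \<Rightarrow> bool) \<Rightarrow> ('n \<Rightarrow> 'c set) \<Rightarrow> real" where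
  "min_span_ratio V E A =
     Min {real (card (A u \<inter> A v)) / real (card (A u)) | u v. u \<in> V \<and> v \<in> V \<and> E v u}"

definition clock_inv :: "(real \<Rightarrow> real) \<Rightarrow> real \<Rightarrow> real" where
  "clock_inv C x = (THE t. C t = x)"

text \<open>A node with clock C starting at real time s: frame k occupies local times
  [C s + k L, C s + (k+1) L), slot j (j < 3) of frame k occupies local times
  [C s + (k + j/3) L, C s + (k + (j+1)/3) L).\<close>
definition frame_start :: "(real \<Rightarrow> real) \<Rightarrow> real \<Rightarrow> real \<Rightarrow> nat \<Rightarrow> real" where
  "frame_start C s L k = clock_inv C (C s + real k * L)"

definition frame_iv :: "(real \<Rightarrow> real) \<Rightarrow> real \<Rightarrow> real \<Rightarrow> nat \<Rightarrow> real set" where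
  "frame_iv C s L k = {frame_start C s L k ..< frame_start C s L (Suc k)}"

definition slot_iv :: "(real \<Rightarrow> real) \<Rightarrow> real \<Rightarrow> real \<Rightarrow> nat \<Rightarrow> nat \<Rightarrow> real set" where
  "slot_iv C s L k j =
     {clock_inv C (C s + (real k + real j / 3) * L) ..< clock_inv C (C s + (real k + real (Suc j) / 3) * L)}"

definition full_frames_by :: "(real \<Rightarrow> real) \<Rightarrow> real \<Rightarrow> real \<Rightarrow> real \<Rightarrow> real \<Rightarrow> nat" where
  "full_frames_by C s L Ts T =
     card {k. Ts \<le> frame_start C s L k \<and> frame_start C s L (Suc k) \<le> T}"

definition tx_prob :: "('n \<Rightarrow> 'c set) \<Rightarrow> nat \<Rightarrow> 'n \<Rightarrow> real" where
  "tx_prob A Dest u = min (1/2) (real (card (A u)) / (3 * real Dest))"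

text \<open>An outcome w assigns to every node u and frame index k the pair
  (chosen channel, transmit?). All choices are independent: product measure.\<close>
definition alg_space :: "'n set \<Rightarrow> ('n \<Rightarrow> 'c set) \<Rightarrow> nat \<Rightarrow> ('n \<times> nat \<Rightarrow> 'c \<times> bool) measure" where
  "alg_space V A Dest =
     PiM (V \<times> UNIV) (\<lambda>(u, k). measure_pmf (pair_pmf (pmf_of_set (A u)) (bernoulli_pmf (tx_prob A Dest u))))"

definition listens_at ::
  "('n \<Rightarrow> real \<Rightarrow> real) \<Rightarrow> ('n \<Rightarrow> real) \<Rightarrow> real \<Rightarrow> ('n \<times> nat \<Rightarrow> 'c \<times> bool) \<Rightarrow> 'n \<Rightarrow> 'c \<Rightarrow> real \<Rightarrow> bool" where
  "listens_at C s L \<omega> u c t \<longleftrightarrow>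
     (\<exists>k. t \<in> frame_iv (C u) (s u) L k \<and> fst (\<omega> (u, k)) = c \<and> \<not> snd (\<omega> (u, k)))"

definition transmits_at ::
  "('n \<Rightarrow> real \<Rightarrow> real) \<Rightarrow> ('n \<Rightarrow> real) \<Rightarrow> real \<Rightarrow> ('n \<times> nat \<Rightarrow> 'c \<times> bool) \<Rightarrow> 'n \<Rightarrow> 'c \<Rightarrow> real \<Rightarrow> bool" where
  "transmits_at C s L \<omega> w c t \<longleftrightarrow>
     (\<exists>k j. j < 3 \<and> t \<in> slot_iv (C w) (s w) L k j \<and> fst (\<omega> (w, k)) = c \<and> snd (\<omega> (w, k)))"

text \<open>Reception guarantee of the model: u receives v's message by real time T
  if there are a channel c and a real-time interval I (ending by T) such that
  u listens on c throughout I, v transmits a message (one slot) on c during I,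
  and no other neighbor of u on c transmits on c at any time during I.\<close>
definition received_by ::
  "('n \<Rightarrow> 'n \<Rightarrow> bool) \<Rightarrow> ('n \<Rightarrow> 'c set) \<Rightarrow> ('n \<Rightarrow> real \<Rightarrow> real) \<Rightarrow> ('n \<Rightarrow> real) \<Rightarrow> real \<Rightarrow>
   ('n \<times> nat \<Rightarrow> 'c \<times> bool) \<Rightarrow> real \<Rightarrow> 'n \<Rightarrow> 'n \<Rightarrow> bool" where
  "received_by E A C s L \<omega> T v u \<longleftrightarrow>
     (\<exists>c a b. b \<le> T \<and> nbr_on E A u v c \<and>
        (\<forall>t \<in> {a..<b}. listens_at C s L \<omega> u c t) \<and>
        (\<exists>k j. j < 3 \<and> fst (\<omega> (v, k)) = c \<and> snd (\<omega> (v, k)) \<and>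
               slot_iv (C v) (s v) L k j \<subseteq> {a..<b}) \<and>
        (\<forall>w. nbr_on E A u w c \<and> w \<noteq> v \<longrightarrow> (\<forall>t \<in> {a..<b}. \<not> transmits_at C s L \<omega> w c t)))"

end

theory Submission
  imports Defs
begin

lemma pps: "product_prob_space (\<lambda>i. measure_pmf (p i))"
  by unfold_locales (simp add: prob_space_measure_pmf)

lemma indep_coords:
  assumes "I \<noteq> {}"
  shows "prob_space.indep_vars (PiM I (\<lambda>i. measure_pmf (p i))) (\<lambda>i. measure_pmf (p i)) (\<lambda>i \<omega>. \<omega> i) I"
proof -
  interpret product_prob_space "\<lambda>i. measure_pmf (p i)" by (rule pps)
  show ?thesis
  proof (subst indep_vars_iff_distr_eq_PiM'[OF assms])
    show "random_variable (measure_pmf (p i)) (\<lambda>\<omega>. \<omega> i)" if "i \<in> I" for i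
      using that by (simp add: measurable_component_singleton)
    have "distr (PiM I (\<lambda>i. measure_pmf (p i))) (PiM I (\<lambda>i. measure_pmf (p i))) (\<lambda>x. \<lambda>i\<in>I. x i)
        = distr (PiM I (\<lambda>i. measure_pmf (p i))) (PiM I (\<lambda>i. measure_pmf (p i))) (\<lambda>x. x)"
      by (rule distr_cong) (auto simp: space_PiM PiE_def extensional_restrict)
    also have "\<dots> = PiM I (\<lambda>i. measure_pmf (p i))" by (rule distr_id)
    also have "\<dots> = PiM I (\<lambda>i. distr (PiM I (\<lambda>i. measure_pmf (p i))) (measure_pmf (p i)) (\<lambda>x. x i))"
      by (rule PiM_cong) (auto simp: PiM_component)
    finally show "distr (PiM I (\<lambda>i. measure_pmf (p i))) (PiM I (\<lambda>i. measure_pmf (p i))) (\<lambda>x. \<lambda>i\<in>I. x i)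
        = PiM I (\<lambda>i. distr (PiM I (\<lambda>i. measure_pmf (p i))) (measure_pmf (p i)) (\<lambda>x. x i))" .
  qed
qed

lemma indep_blocks:
  fixes p :: "'i \<Rightarrow> 'a pmf"
  assumes "I \<noteq> {}" "finite T" "T \<noteq> {}" "\<And>t. t \<in> T \<Longrightarrow> J t \<subseteq> I"
    and "disjoint_family_on J T" and "\<And>t. t \<in> T \<Longrightarrow> B t \<in> sets (PiM (J t) (\<lambda>i. measure_pmf (p i)))"
  shows "measure (PiM I (\<lambda>i. measure_pmf (p i))) (\<Inter>t\<in>T. prod_emb I (\<lambda>i. measure_pmf (p i)) (J t) (B t))
       = (\<Prod>t\<in>T. measure (PiM I (\<lambda>i. measure_pmf (p i))) (prod_emb I (\<lambda>i. measure_pmf (p i)) (J t) (B t)))"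
proof -
  interpret product_prob_space "\<lambda>i. measure_pmf (p i)" by (rule pps)
  have iv: "P.indep_vars (\<lambda>t. PiM (J t) (\<lambda>i. measure_pmf (p i))) (\<lambda>t \<omega>. restrict (\<lambda>i. \<omega> i) (J t)) T"
    by (rule P.indep_vars_restrict[OF indep_coords[OF assms(1)]]) (use assms in auto)
  have "P.indep_sets (\<lambda>t. {(\<lambda>\<omega>. restrict (\<lambda>i. \<omega> i) (J t)) -` A \<inter> space (PiM I (\<lambda>i. measure_pmf (p i))) | A. A \<in> sets (PiM (J t) (\<lambda>i. measure_pmf (p i)))}) T"
    using iv unfolding P.indep_vars_def2 by auto
  moreover have "prod_emb I (\<lambda>i. measure_pmf (p i)) (J t) (B t) = (\<lambda>\<omega>. restrict (\<lambda>i. \<omega> i) (J t)) -` B t \<inter> space (PiM I (\<lambda>i. measure_pmf (p i)))" for t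
    by (simp add: prod_emb_def space_PiM)
  ultimately show ?thesis
    using assms by (intro P.indep_setsD) auto
qed

lemma rect_prob:
  fixes p :: "'i \<Rightarrow> 'a pmf"
  assumes "J \<subseteq> I" "finite J"
  shows "measure (PiM I (\<lambda>i. measure_pmf (p i))) (prod_emb I (\<lambda>i. measure_pmf (p i)) J (PiE J X))
      = (\<Prod>j\<in>J. measure_pmf.prob (p j) (X j))"
proof -
  interpret product_prob_space "\<lambda>i. measure_pmf (p i)" by (rule pps)
  show ?thesis
    using emeasure_PiM_emb[OF assms, of X]
    by (simp add: P.emeasure_eq_measure measure_pmf.emeasure_eq_measure prod_ennreal prod_nonneg)
qed

locale clk =
  fixes C :: "real \<Rightarrow> real" and \<delta> :: real
  assumes rate: "\<And>t d. d \<ge> 0 \<Longrightarrow> (1 - \<delta>) * d \<le> C (t + d) - C t \<and> C (t + d) - C t \<le> (1 + \<delta>) * d"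
    and dle: "\<delta> \<le> 1/7"
begin

lemma dge: "\<delta> \<ge> 0"
  using rate[of 1 0] by simp

lemma lo: "t1 \<le> t2 \<Longrightarrow> (1 - \<delta>) * (t2 - t1) \<le> C t2 - C t1"
  using rate[of "t2 - t1" t1] by simp
lemma hi: "t1 \<le> t2 \<Longrightarrow> C t2 - C t1 \<le> (1 + \<delta>) * (t2 - t1)"
  using rate[of "t2 - t1" t1] by simp

lemma smono: "t1 < t2 \<Longrightarrow> C t1 < C t2"
proof -
  assume "t1 < t2"
  then have "(1 - \<delta>) * (t2 - t1) > 0" using dle by simp
  with lo[of t1 t2] \<open>t1 < t2\<close> show ?thesis by linarith
qed

lemma lip: "\<bar>C x - C y\<bar> \<le> (1 + \<delta>) * \<bar>x - y\<bar>"
proof (cases "x \<le> y")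
  case True
  then show ?thesis using hi[of x y] smono[of x y] dge by (cases "x = y") (auto simp: abs_if)
next
  case False
  then show ?thesis using hi[of y x] smono[of y x] dge by (auto simp: abs_if)
qed

lemma cont: "continuous_on S C"
proof -
  have "(1 + \<delta>)-lipschitz_on S C"
    by (rule lipschitz_onI) (use lip dge in \<open>auto simp: dist_real_def\<close>)
  then show ?thesis by (rule lipschitz_on_continuous_on)
qed

lemma surj_pt: "\<exists>t. C t = y"
proof -
  define a where "a = 0 - \<bar>y - C 0\<bar> / (1 - \<delta>)"
  define b where "b = 0 + \<bar>y - C 0\<bar> / (1 - \<delta>)"
  have d: "1 - \<delta> > 0" using dle by simp
  have ab: "a \<le> 0" "0 \<le> b" using d by (auto simp: a_def b_def)
  have "(1 - \<delta>) * (0 - a) = \<bar>y - C 0\<bar>" using d by (simp add: a_def)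
  with lo[OF ab(1)] have Ca: "C a \<le> y" by linarith
  have "(1 - \<delta>) * (b - 0) = \<bar>y - C 0\<bar>" using d by (simp add: b_def)
  with lo[OF ab(2)] have Cb: "y \<le> C b" by linarith
  from IVT'[of C a y b, OF Ca Cb] ab cont show ?thesis by auto
qed

lemma inv_eq: "C (clock_inv C y) = y"
proof -
  obtain t where t: "C t = y" using surj_pt by blast
  have "C (THE t. C t = y) = y"
  proof (rule theI)
    show "C t = y" by fact
    fix t' assume "C t' = y"
    then show "t' = t" using t smono by (metis linorder_neq_iff less_irrefl)
  qed
  then show ?thesis by (simp add: clock_inv_def)
qed

lemma inv_C: "clock_inv C (C t) = t"
  using inv_eq[of "C t"] smono by (metis linorder_neq_iff less_irrefl)

lemma inv_bounds:
  assumes "y1 \<le> y2"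
  shows "(y2 - y1) / (1 + \<delta>) \<le> clock_inv C y2 - clock_inv C y1"
    and "clock_inv C y2 - clock_inv C y1 \<le> (y2 - y1) / (1 - \<delta>)"
proof -
  let ?t1 = "clock_inv C y1" and ?t2 = "clock_inv C y2"
  have e1: "C ?t1 = y1" and e2: "C ?t2 = y2" by (simp_all add: inv_eq)
  have le: "?t1 \<le> ?t2"
  proof (rule ccontr)
    assume "\<not> ?t1 \<le> ?t2"
    then have "C ?t2 < C ?t1" using smono by simp
    with e1 e2 assms show False by simp
  qed
  have d: "1 - \<delta> > 0" "1 + \<delta> > 0" using dle dge by auto
  from hi[OF le] e1 e2 have "y2 - y1 \<le> (1 + \<delta>) * (?t2 - ?t1)" by simp
  then show "(y2 - y1) / (1 + \<delta>) \<le> ?t2 - ?t1" using d by (simp add: divide_le_eq mult.commute)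
  from lo[OF le] e1 e2 have "(1 - \<delta>) * (?t2 - ?t1) \<le> y2 - y1" by simp
  then show "?t2 - ?t1 \<le> (y2 - y1) / (1 - \<delta>)" using d by (simp add: le_divide_eq mult.commute)
qed

end

locale nd = clk +
  fixes s L :: real
  assumes Lpos: "L > 0"
begin

definition P :: "real \<Rightarrow> real" where "P z = clock_inv C (C s + z * L)"

lemma dd: "1 - \<delta> > 0" "1 + \<delta> > 0" using dle dge by auto

lemma P_bounds:
  assumes "z1 \<le> z2"
  shows "(z2 - z1) * L / (1 + \<delta>) \<le> P z2 - P z1" "P z2 - P z1 \<le> (z2 - z1) * L / (1 - \<delta>)"
proof -
  have le: "C s + z1 * L \<le> C s + z2 * L" using assms Lpos by (simp add: mult_right_mono)
  have eq: "(C s + z2 * L) - (C s + z1 * L) = (z2 - z1) * L" by (simp add: algebra_simps)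
  show "(z2 - z1) * L / (1 + \<delta>) \<le> P z2 - P z1" using inv_bounds(1)[OF le] eq by (simp add: P_def)
  show "P z2 - P z1 \<le> (z2 - z1) * L / (1 - \<delta>)" using inv_bounds(2)[OF le] eq by (simp add: P_def)
qed

lemma P_less: "z1 < z2 \<Longrightarrow> P z1 < P z2"
proof -
  assume a: "z1 < z2"
  have "(z2 - z1) * L / (1 + \<delta>) > 0" using a Lpos dd by simp
  with P_bounds(1)[of z1 z2] a show ?thesis by linarith
qed

lemma P_le: "z1 \<le> z2 \<Longrightarrow> P z1 \<le> P z2"
  by (metis P_less order_le_less order_refl)

lemma P_less_iff: "P z1 < P z2 \<longleftrightarrow> z1 < z2"
  using P_less P_le by (meson not_less)

lemma P0: "P 0 = s" by (simp add: P_def inv_C)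

lemma fs_eq: "frame_start C s L k = P (real k)"
  by (simp add: frame_start_def P_def)

lemma fiv_eq: "frame_iv C s L k = {P (real k) ..< P (real k + 1)}"
  by (simp add: frame_iv_def fs_eq add.commute)

lemma siv_eq: "slot_iv C s L k j = {P (real k + real j / 3) ..< P (real k + real (Suc j) / 3)}"
  by (simp add: slot_iv_def P_def)

lemma slot_sub_frame: "j < 3 \<Longrightarrow> slot_iv C s L k j \<subseteq> frame_iv C s L k"
proof -
  assume j: "j < 3"
  have "P (real k) \<le> P (real k + real j / 3)" by (rule P_le) simp
  moreover have "P (real k + real (Suc j) / 3) \<le> P (real k + 1)" by (rule P_le) (use j in simp)
  ultimately show ?thesis unfolding siv_eq fiv_eq by auto
qed

lemma frames_disj:
  assumes "t \<in> frame_iv C s L k1" "t \<in> frame_iv C s L k2" shows "k1 = k2"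
proof (rule ccontr)
  assume "k1 \<noteq> k2"
  then consider "k1 + 1 \<le> k2" | "k2 + 1 \<le> k1" by linarith
  then show False
  proof cases
    case 1
    then have "P (real k1 + 1) \<le> P (real k2)" by (intro P_le) simp
    with assms show False by (auto simp: fiv_eq)
  next
    case 2
    then have "P (real k2 + 1) \<le> P (real k1)" by (intro P_le) simp
    with assms show False by (auto simp: fiv_eq)
  qed
qed

lemma frame_len: "L / (1 + \<delta>) \<le> P (real k + 1) - P (real k)" "P (real k + 1) - P (real k) \<le> L / (1 - \<delta>)"
  using P_bounds[of "real k" "real k + 1"] by auto

lemma P_ge: "z \<ge> 0 \<Longrightarrow> P z \<ge> s + z * L / (1 + \<delta>)"
  using P_bounds(1)[of 0 z] P0 by simp

lemma slot_n: "slot_iv C s L (n div 3) (n mod 3) = {P (real n / 3) ..< P (real (Suc n) / 3)}"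
proof -
  have e: "real n = 3 * real (n div 3) + real (n mod 3)"
    using div_mult_mod_eq[of n 3] by (metis of_nat_add of_nat_mult of_nat_numeral mult.commute)
  have a: "real (n div 3) + real (n mod 3) / 3 = real n / 3"
    using e by (simp add: field_simps)
  have b: "real (n div 3) + real (Suc (n mod 3)) / 3 = real (Suc n) / 3"
    using e by (simp add: field_simps)
  show ?thesis by (simp only: siv_eq a b)
qed

lemma grid:
  assumes "s \<le> \<alpha>"
  shows "\<exists>n. \<alpha> \<le> P (real n / 3) \<and> P (real (Suc n) / 3) \<le> \<alpha> + 2 * L / (3 * (1 - \<delta>))"
proof -
  obtain m :: nat where m: "real m > (\<alpha> - s) * (1 + \<delta>) * 3 / L" using reals_Archimedean2 by blast
  have "\<alpha> \<le> P (real m / 3)"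
  proof -
    have "P (real m / 3) \<ge> s + (real m / 3) * L / (1 + \<delta>)" by (rule P_ge) simp
    moreover have "(real m / 3) * L / (1 + \<delta>) \<ge> \<alpha> - s"
      using m dd Lpos by (simp add: field_simps)
    ultimately show ?thesis by linarith
  qed
  then have ex: "\<exists>n. \<alpha> \<le> P (real n / 3)" by blast
  define n where "n = (LEAST n. \<alpha> \<le> P (real n / 3))"
  have n1: "\<alpha> \<le> P (real n / 3)" unfolding n_def by (rule LeastI_ex[OF ex])
  have step: "P (real (Suc k) / 3) - P (real k / 3) \<le> L / (3 * (1 - \<delta>))" for k
    using P_bounds(2)[of "real k / 3" "real (Suc k) / 3"] by (simp add: field_simps)
  show ?thesis
  proof (cases n)
    case 0
    then have "P (real n / 3) = \<alpha>" using n1 P0 assms by simp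
    moreover have "L / (3 * (1 - \<delta>)) \<le> 2 * L / (3 * (1 - \<delta>))" using Lpos dd by (simp add: field_simps)
    ultimately show ?thesis using n1 step[of n] by (intro exI[of _ n]) auto
  next
    case (Suc k)
    then have "\<not> \<alpha> \<le> P (real k / 3)" using not_less_Least[of k "\<lambda>n. \<alpha> \<le> P (real n / 3)"] n_def by auto
    moreover have "L / (3 * (1 - \<delta>)) + L / (3 * (1 - \<delta>)) = 2 * L / (3 * (1 - \<delta>))" by (simp add: field_simps)
    ultimately show ?thesis using n1 step[of n] step[of k] Suc by (intro exI[of _ n]) auto
  qed
qed

lemma frame_short:
  assumes "t1 \<in> frame_iv C s L k" "t2 \<in> frame_iv C s L k"
  shows "t2 - t1 < L / (1 - \<delta>)"
  using assms frame_len(2)[of k] by (auto simp: fiv_eq)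

lemma few_overlap:
  assumes "b - a \<le> L / (3 * (1 - \<delta>))"
  shows "finite {k. frame_iv C s L k \<inter> {a..<b} \<noteq> {}} \<and> card {k. frame_iv C s L k \<inter> {a..<b} \<noteq> {}} \<le> 2"
proof (cases "{k. frame_iv C s L k \<inter> {a..<b} \<noteq> {}} = {}")
  case True then show ?thesis by simp
next
  case False
  let ?K = "{k. frame_iv C s L k \<inter> {a..<b} \<noteq> {}}"
  have far: False if k1: "k1 \<in> ?K" and k2: "k2 \<in> ?K" and le: "k1 + 2 \<le> k2" for k1 k2
  proof -
    obtain t1 where t1: "t1 \<in> frame_iv C s L k1" "a \<le> t1" "t1 < b" using k1 by auto
    obtain t2 where t2: "t2 \<in> frame_iv C s L k2" "a \<le> t2" "t2 < b" using k2 by auto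
    have "P (real (k1 + 1) + 1) \<le> P (real k2)" by (rule P_le) (use le in simp)
    moreover have "L / (1 + \<delta>) \<le> P (real (k1 + 1) + 1) - P (real (k1 + 1))" by (rule frame_len)
    moreover have "t1 < P (real k1 + 1)" "P (real k2) \<le> t2" using t1 t2 by (auto simp: fiv_eq)
    moreover have "L / (3 * (1 - \<delta>)) \<le> L / (1 + \<delta>)"
      using dd Lpos dle by (simp add: frac_le_eq divide_le_cancel field_simps)
    ultimately show False using assms t1 t2 by (simp add: add.commute)
  qed
  define m where "m = (LEAST k. k \<in> ?K)"
  have mK: "m \<in> ?K" using False unfolding m_def by (metis (no_types, lifting) LeastI_ex ex_in_conv)
  have sub: "?K \<subseteq> {m, Suc m}"
  proof
    fix k assume kK: "k \<in> ?K"
    have "m \<le> k" unfolding m_def by (rule Least_le) (use kK in simp)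
    moreover have "\<not> m + 2 \<le> k" using far[OF mK kK] by blast
    ultimately show "k \<in> {m, Suc m}" by auto
  qed
  have "card ?K \<le> card {m, Suc m}" by (rule card_mono) (use sub in auto)
  then show ?thesis using sub finite_subset by fastforce
qed

context fixes Ts :: real begin

definition KK :: "real \<Rightarrow> nat set" where
  "KK T = {k. Ts \<le> frame_start C s L k \<and> frame_start C s L (Suc k) \<le> T}"

lemma KK_fin: "finite (KK T)"
proof -
  obtain m :: nat where m: "real m > (T - s) * (1 + \<delta>) / L" using reals_Archimedean2 by blast
  have "KK T \<subseteq> {..<m}"
  proof
    fix k assume "k \<in> KK T"
    then have T: "P (real k + 1) \<le> T" by (simp add: KK_def fs_eq add.commute)
    have "P (real k + 1) \<ge> s + (real k + 1) * L / (1 + \<delta>)" by (rule P_ge) simp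
    with T have "(real k + 1) * L / (1 + \<delta>) \<le> T - s" by linarith
    then have "(real k + 1) \<le> (T - s) * (1 + \<delta>) / L" using dd Lpos by (simp add: field_simps)
    with m show "k \<in> {..<m}" by simp
  qed
  then show ?thesis using finite_subset by blast
qed

lemma KK_mono: "T1 \<le> T2 \<Longrightarrow> KK T1 \<subseteq> KK T2"
  by (auto simp: KK_def)

lemma thresh:
  assumes "s \<le> Ts" "X > 0"
  shows "\<exists>\<theta>. \<forall>T. (X \<le> real (card (KK T)) \<longleftrightarrow> \<theta> \<le> T)"
proof -
  let ?G = "\<lambda>T. X \<le> real (card (KK T))"
  have Gmono: "?G T2" if "?G T1" "T1 \<le> T2" for T1 T2
    using that card_mono[OF KK_fin KK_mono[of T1 T2]] by (meson of_nat_le_iff order.trans)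
  obtain m :: nat where m: "real m > (Ts - s) * (1 + \<delta>) / L" using reals_Archimedean2 by blast
  have Pm: "Ts \<le> P (real m)"
  proof -
    have "P (real m) \<ge> s + real m * L / (1 + \<delta>)" by (rule P_ge) simp
    moreover have "real m * L / (1 + \<delta>) \<ge> Ts - s" using m dd Lpos by (simp add: field_simps)
    ultimately show ?thesis by linarith
  qed
  define n where "n = nat \<lceil>X\<rceil>"
  have "{m..<m+n} \<subseteq> KK (P (real (m + n)))"
  proof
    fix k assume k: "k \<in> {m..<m+n}"
    have "Ts \<le> P (real k)" using Pm P_le[of "real m" "real k"] k by auto
    moreover have "P (real (Suc k)) \<le> P (real (m + n))" by (rule P_le) (use k in simp)
    ultimately show "k \<in> KK (P (real (m + n)))" by (simp add: KK_def fs_eq)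
  qed
  then have "card {m..<m+n} \<le> card (KK (P (real (m + n))))" by (rule card_mono[OF KK_fin])
  then have "n \<le> card (KK (P (real (m + n))))" by simp
  moreover have "X \<le> real n" unfolding n_def by linarith
  ultimately have ex: "?G (P (real (m + n)))" by linarith
  have key: "\<exists>k. ?G (P (real (Suc k))) \<and> P (real (Suc k)) \<le> T" if G: "?G T" for T
  proof -
    have ne: "KK T \<noteq> {}" using G assms(2) by (cases "KK T = {}") auto
    define k where "k = Max (KK T)"
    have kK: "k \<in> KK T" using ne KK_fin by (simp add: k_def)
    have PT: "P (real (Suc k)) \<le> T" using kK by (simp add: KK_def fs_eq)
    have "KK T \<subseteq> KK (P (real (Suc k)))"
    proof
      fix k' assume k': "k' \<in> KK T"
      then have "k' \<le> k" using KK_fin by (simp add: k_def)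
      then have "P (real (Suc k')) \<le> P (real (Suc k))" by (intro P_le) simp
      with k' show "k' \<in> KK (P (real (Suc k)))" by (simp add: KK_def fs_eq)
    qed
    then have "?G (P (real (Suc k)))" using G card_mono[OF KK_fin] by (meson of_nat_le_iff order.trans)
    with PT show ?thesis by blast
  qed
  obtain k0 where k0: "?G (P (real (Suc k0)))" using key[OF ex] by blast
  define kk where "kk = (LEAST k. ?G (P (real (Suc k))))"
  have Gkk: "?G (P (real (Suc kk)))" unfolding kk_def by (rule LeastI[where P="\<lambda>k. ?G (P (real (Suc k)))", OF k0])
  show ?thesis
  proof (intro exI allI iffI)
    fix T assume G: "?G T"
    obtain k where k: "?G (P (real (Suc k)))" "P (real (Suc k)) \<le> T" using key[OF G] by blast
    have "kk \<le> k" unfolding kk_def by (rule Least_le) (rule k(1))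
    then have "P (real (Suc kk)) \<le> P (real (Suc k))" by (intro P_le) simp
    with k show "P (real (Suc kk)) \<le> T" by linarith
  next
    fix T assume "P (real (Suc kk)) \<le> T"
    then show "?G T" using Gmono[OF Gkk] by blast
  qed
qed

end

end

lemma pred_coord:
  fixes p :: "'i \<Rightarrow> 'a pmf"
  assumes "i \<in> I"
  shows "{\<omega> \<in> space (PiM I (\<lambda>i. measure_pmf (p i))). Q (\<omega> i)} \<in> sets (PiM I (\<lambda>i. measure_pmf (p i)))"
proof -
  have "{\<omega> \<in> space (PiM I (\<lambda>i. measure_pmf (p i))). Q (\<omega> i)} = (\<lambda>\<omega>. \<omega> i) -` {x. Q x} \<inter> space (PiM I (\<lambda>i. measure_pmf (p i)))"
    by auto
  also have "\<dots> \<in> sets (PiM I (\<lambda>i. measure_pmf (p i)))"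
    by (rule measurable_sets[OF measurable_component_singleton[OF assms]]) simp
  finally show ?thesis .
qed

lemma prod_ge_1_minus_sum:
  fixes x :: "'a \<Rightarrow> real"
  assumes "finite F" "\<And>i. i \<in> F \<Longrightarrow> 0 \<le> x i \<and> x i \<le> 1"
  shows "1 - (\<Sum>i\<in>F. x i) \<le> (\<Prod>i\<in>F. 1 - x i)"
  using assms
proof (induction F rule: finite_induct)
  case empty then show ?case by simp
next
  case (insert a F)
  have IH: "1 - (\<Sum>i\<in>F. x i) \<le> (\<Prod>i\<in>F. 1 - x i)" using insert by auto
  have xa: "0 \<le> x a" "x a \<le> 1" using insert by auto
  have S: "0 \<le> (\<Sum>i\<in>F. x i)" using insert by (auto intro: sum_nonneg)
  have Pn: "0 \<le> (\<Prod>i\<in>F. 1 - x i)" "(\<Prod>i\<in>F. 1 - x i) \<le> 1" using insert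
    by (auto intro!: prod_nonneg prod_le_1)
  have "1 - (x a + (\<Sum>i\<in>F. x i)) \<le> (1 - x a) * (1 - (\<Sum>i\<in>F. x i))"
    using xa S by (simp add: algebra_simps)
  also have "\<dots> \<le> (1 - x a) * (\<Prod>i\<in>F. 1 - x i)" using IH xa by (intro mult_left_mono) auto
  finally show ?case using insert by simp
qed

locale net =
  fixes V :: "'n set" and A :: "'n \<Rightarrow> 'c set" and E :: "'n \<Rightarrow> 'n \<Rightarrow> bool"
    and C :: "'n \<Rightarrow> real \<Rightarrow> real" and s :: "'n \<Rightarrow> real"
    and L \<delta> \<epsilon> Ts :: real and Dest :: nat
  assumes finV: "finite V" and neV: "V \<noteq> {}"
    and chans: "\<forall>u \<in> V. finite (A u) \<and> A u \<noteq> {}"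
    and E_in: "\<forall>u v. E u v \<longrightarrow> u \<in> V \<and> v \<in> V"
    and E_sym: "\<forall>u v. E u v \<longrightarrow> E v u"
    and E_irrefl: "\<forall>u. \<not> E u u"
    and E_common: "\<forall>u v. E u v \<longrightarrow> A u \<inter> A v \<noteq> {}"
    and Dest_pos: "Dest > 0"
    and Dest_ge: "max_deg V E A \<le> Dest"
    and clock: "\<forall>u \<in> V. \<forall>t d. d \<ge> 0 \<longrightarrow>
                  (1 - \<delta>) * d \<le> C u (t + d) - C u t \<and> C u (t + d) - C u t \<le> (1 + \<delta>) * d"
    and delta_le: "\<delta> \<le> 1/7"
    and L_pos: "L > 0"
    and eps: "0 < \<epsilon>" "\<epsilon> < 1"
    and Ts: "\<forall>u \<in> V. s u \<le> Ts"
begin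

definition pp :: "'n \<times> nat \<Rightarrow> ('c \<times> bool) pmf" where
  "pp j = pair_pmf (pmf_of_set (A (fst j))) (bernoulli_pmf (tx_prob A Dest (fst j)))"

abbreviation "I0 \<equiv> V \<times> (UNIV :: nat set)"
abbreviation "MM \<equiv> \<lambda>j. measure_pmf (pp j)"
abbreviation "M0 \<equiv> PiM I0 MM"

definition "Mx = max (2 * real (max_chan V A)) (3 * real Dest)"
definition "rho = min_span_ratio V E A"

lemma psM: "prob_space M0"
  by (rule prob_space_PiM) (simp add: prob_space_measure_pmf)

lemma alg_eq: "alg_space V A Dest = M0"
  unfolding alg_space_def pp_def by (rule PiM_cong) (auto simp: case_prod_beta)

lemma nd_x: "x \<in> V \<Longrightarrow> nd (C x) \<delta> L"
  by unfold_locales (use clock delta_le L_pos in auto)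

lemma dd: "1 - \<delta> > 0" "1 + \<delta> > 0" "\<delta> \<ge> 0"
proof -
  obtain x where "x \<in> V" using neV by blast
  then interpret X: nd "C x" \<delta> "s x" L by (rule nd_x)
  show "1 - \<delta> > 0" "1 + \<delta> > 0" "\<delta> \<ge> 0" using X.dd X.dge by auto
qed

lemma card_A_le: "x \<in> V \<Longrightarrow> card (A x) \<le> max_chan V A"
  unfolding max_chan_def using finV by (intro Max_ge) auto

lemma card_A_pos: "x \<in> V \<Longrightarrow> card (A x) > 0"
  using chans by (simp add: card_gt_0_iff)

lemma deg_le: "x \<in> V \<Longrightarrow> c \<in> A x \<Longrightarrow> deg V E A x c \<le> Dest"
proof -
  assume x: "x \<in> V" "c \<in> A x"
  have fin: "finite {deg V E A u c | u c. u \<in> V \<and> c \<in> A u}"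
  proof -
    have "{deg V E A u c | u c. u \<in> V \<and> c \<in> A u} = (\<lambda>(u, c). deg V E A u c) ` (SIGMA u:V. A u)"
      by auto
    then show ?thesis using finV chans by (simp add: finite_SigmaI)
  qed
  have "deg V E A x c \<le> max_deg V E A" unfolding max_deg_def
    by (rule Max_ge[OF fin]) (use x in blast)
  with Dest_ge show ?thesis by simp
qed

lemma rho_le:
  assumes "E v u" shows "rho \<le> real (card (A u \<inter> A v)) / real (card (A u))"
proof -
  have fin: "finite {real (card (A u \<inter> A v)) / real (card (A u)) | u v. u \<in> V \<and> v \<in> V \<and> E v u}"
  proof -
    have "{real (card (A u \<inter> A v)) / real (card (A u)) | u v. u \<in> V \<and> v \<in> V \<and> E v u}
        \<subseteq> (\<lambda>(u, v). real (card (A u \<inter> A v)) / real (card (A u))) ` (V \<times> V)" by auto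
    then show ?thesis using finV finite_subset by blast
  qed
  show ?thesis unfolding rho_def min_span_ratio_def
    by (rule Min_le[OF fin]) (use assms E_in in blast)
qed

lemma rho_pos:
  assumes "E v u" shows "rho > 0"
proof -
  let ?S = "{real (card (A u \<inter> A v)) / real (card (A u)) | u v. u \<in> V \<and> v \<in> V \<and> E v u}"
  have fin: "finite ?S"
  proof -
    have "?S \<subseteq> (\<lambda>(u, v). real (card (A u \<inter> A v)) / real (card (A u))) ` (V \<times> V)" by auto
    then show ?thesis using finV finite_subset by blast
  qed
  have ne: "?S \<noteq> {}" using assms E_in by blast
  have "\<forall>x\<in>?S. x > 0"
  proof
    fix x assume "x \<in> ?S"
    then obtain u' v' where x: "x = real (card (A u' \<inter> A v')) / real (card (A u'))" "u' \<in> V" "v' \<in> V" "E v' u'"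
      by blast
    have "A u' \<inter> A v' \<noteq> {}" using E_common E_sym x(4) by blast
    moreover have "finite (A u' \<inter> A v')" using chans x(2) by auto
    ultimately have "card (A u' \<inter> A v') > 0" by (simp add: card_gt_0_iff)
    then show "x > 0" using x card_A_pos[OF x(2)] by simp
  qed
  then show ?thesis unfolding rho_def min_span_ratio_def using fin ne by simp
qed

lemma Mx_pos: "Mx > 0" unfolding Mx_def using Dest_pos by simp

lemma tx_le: "tx_prob A Dest x \<le> 1/2" "0 \<le> tx_prob A Dest x"
  unfolding tx_prob_def by auto

lemma pmf_F: "x \<in> V \<Longrightarrow> c \<in> A x \<Longrightarrow> pmf (pp (x, k)) (c, False) = (1 - tx_prob A Dest x) / card (A x)"
  using chans tx_le[of x] by (simp add: pp_def pmf_pair)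

lemma pmf_T: "x \<in> V \<Longrightarrow> pmf (pp (x, k)) (c, True) = (if c \<in> A x then tx_prob A Dest x / card (A x) else 0)"
  using chans tx_le[of x] by (simp add: pp_def pmf_pair)

end

context net begin

lemma link_bound:
  assumes vu: "E v u" and Xpos: "0 < X"
    and full: "X \<le> real (card (nd.KK (C u) (s u) L Ts Tf))"
  shows "\<exists>F\<in>sets M0. {\<omega> \<in> space M0. \<not> received_by E A C s L \<omega> Tf v u} \<subseteq> F
           \<and> measure M0 F \<le> exp (- (rho / (6 * Mx)) * (X / 3))"
proof -
  have uV: "u \<in> V" and vV: "v \<in> V" using vu E_in by auto
  have uv: "u \<noteq> v" using vu E_irrefl by auto
  have uvE: "E u v" using vu E_sym by auto
  interpret U: nd "C u" \<delta> "s u" L by (rule nd_x[OF uV])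
  interpret W: nd "C v" \<delta> "s v" L by (rule nd_x[OF vV])
  define K where "K = U.KK Ts Tf"
  have finK: "finite K" unfolding K_def by (rule U.KK_fin)
  define Rr where "Rr = (\<lambda>r. {k\<in>K. k mod 3 = r})"
  have "K \<subseteq> Rr 0 \<union> Rr 1 \<union> Rr 2" unfolding Rr_def by auto
  then have "card K \<le> card (Rr 0 \<union> Rr 1 \<union> Rr 2)" using finK by (intro card_mono) (auto simp: Rr_def)
  also have "\<dots> \<le> card (Rr 0) + card (Rr 1) + card (Rr 2)"
    by (meson add_le_mono card_Un_le le_refl order_trans)
  finally have c3: "card K \<le> card (Rr 0) + card (Rr 1) + card (Rr 2)" .
  have "\<exists>r. card K \<le> 3 * card (Rr r)"
  proof (cases "card (Rr 1) \<le> card (Rr 0) \<and> card (Rr 2) \<le> card (Rr 0)")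
    case True then show ?thesis using c3 by (intro exI[of _ 0]) linarith
  next
    case F1: False
    show ?thesis
    proof (cases "card (Rr 2) \<le> card (Rr 1)")
      case True then show ?thesis using c3 F1 by (intro exI[of _ 1]) linarith
    next
      case False then show ?thesis using c3 F1 by (intro exI[of _ 2]) linarith
    qed
  qed
  then obtain r where r: "card K \<le> 3 * card (Rr r)" by blast
  define R where "R = Rr r"
  have finR: "finite R" using finK by (simp add: R_def Rr_def)
  have RK: "R \<subseteq> K" by (auto simp: R_def Rr_def)
  have cardR: "X / 3 \<le> real (card R)" using full r by (simp add: K_def R_def)
  have Rne: "R \<noteq> {}" using cardR Xpos by (cases "R = {}") auto
  have Rsep: "k1 + 3 \<le> k2" if "k1 \<in> R" "k2 \<in> R" "k1 < k2" for k1 k2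
  proof -
    have "k1 mod 3 = k2 mod 3" using that by (simp add: R_def Rr_def)
    then show ?thesis using that(3) by presburger
  qed
  have Rfr: "Ts \<le> U.P (real k)" "U.P (real k + 1) \<le> Tf" if "k \<in> R" for k
    using that RK by (auto simp: K_def U.KK_def U.fs_eq add.commute)
  have "\<forall>k\<in>R. \<exists>n. U.P (real k) \<le> W.P (real n / 3) \<and> W.P (real (Suc n) / 3) \<le> U.P (real k) + 2 * L / (3 * (1 - \<delta>))"
  proof
    fix k assume "k \<in> R"
    then have "s v \<le> U.P (real k)" using Rfr Ts vV by force
    then show "\<exists>n. U.P (real k) \<le> W.P (real n / 3) \<and> W.P (real (Suc n) / 3) \<le> U.P (real k) + 2 * L / (3 * (1 - \<delta>))"
      by (rule W.grid)
  qed
  then obtain ns where ns: "\<And>k. k \<in> R \<Longrightarrow> U.P (real k) \<le> W.P (real (ns k) / 3) \<and> W.P (real (Suc (ns k)) / 3) \<le> U.P (real k) + 2 * L / (3 * (1 - \<delta>))"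
    by metis
  define sa where "sa k = W.P (real (ns k) / 3)" for k
  define sb where "sb k = W.P (real (Suc (ns k)) / 3)" for k
  define kv where "kv k = ns k div 3" for k
  define jv where "jv k = ns k mod 3" for k
  have slot_eq: "slot_iv (C v) (s v) L (kv k) (jv k) = {sa k ..< sb k}" for k
    unfolding kv_def jv_def sa_def sb_def by (rule W.slot_n)
  have jv3: "jv k < 3" for k by (simp add: jv_def)
  have sab: "sa k < sb k" for k unfolding sa_def sb_def by (intro W.P_less) simp
  have slen: "sb k - sa k \<le> L / (3 * (1 - \<delta>))" for k
    using W.P_bounds(2)[of "real (ns k) / 3" "real (Suc (ns k)) / 3"] unfolding sa_def sb_def
    by (simp add: field_simps)
  have sub_u: "{sa k ..< sb k} \<subseteq> frame_iv (C u) (s u) L k" if "k \<in> R" for k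
  proof -
    have "2 * L / (3 * (1 - \<delta>)) \<le> L / (1 + \<delta>)"
      using dd L_pos delta_le by (simp add: field_simps)
    then have "sb k \<le> U.P (real k + 1)"
      using ns[OF that] U.frame_len(1)[of k] unfolding sb_def by linarith
    moreover have "U.P (real k) \<le> sa k" using ns[OF that] unfolding sa_def by simp
    ultimately show ?thesis by (auto simp: U.fiv_eq)
  qed
  have sub_v: "{sa k ..< sb k} \<subseteq> frame_iv (C v) (s v) L (kv k)" for k
    using W.slot_sub_frame[OF jv3] slot_eq by blast
  define Nb where "Nb = {w\<in>V. E u w \<and> w \<noteq> v}"
  have finNb: "finite Nb" using finV by (simp add: Nb_def)
  define Kw where "Kw w k = {m. frame_iv (C w) (s w) L m \<inter> {sa k ..< sb k} \<noteq> {}}" for w k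
  have Kw2: "finite (Kw w k) \<and> card (Kw w k) \<le> 2" if "w \<in> V" for w k
    unfolding Kw_def by (rule nd.few_overlap[OF nd_x[OF that] slen])
  define J where "J k = insert (u, k) (insert (v, kv k) (Sigma Nb (\<lambda>w. Kw w k)))" for k
  have JI: "J k \<subseteq> I0" for k using uV vV by (auto simp: J_def Nb_def)
  have finJ: "finite (J k)" for k
    unfolding J_def using finNb Kw2 by (auto simp: Nb_def intro!: finite_SigmaI)
  define Ch where "Ch = A u \<inter> A v"
  have finCh: "finite Ch" using chans uV by (simp add: Ch_def)
  define Xs where "Xs c j = (if fst j = u then {(c, False)} else if fst j = v then {(c, True)} else UNIV - {(c, True)})" for c :: 'c and j :: "'n \<times> nat"
  define Succ where "Succ k = (\<Union>c\<in>Ch. PiE (J k) (Xs c))" for k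
  define D where "D k = prod_emb I0 MM (J k) (space (PiM (J k) MM) - Succ k)" for k
  define F where "F = (\<Inter>k\<in>R. D k)"
  have Succ_sets: "Succ k \<in> sets (PiM (J k) MM)" for k
    unfolding Succ_def using finCh finJ by (intro sets.finite_UN) (auto intro!: sets_PiM_I_finite)
  have D_sets: "D k \<in> sets M0" for k
    unfolding D_def using Succ_sets JI by (intro measurable_prod_emb) auto
  have F_sets: "F \<in> sets M0" unfolding F_def using finR Rne D_sets by (intro sets.finite_INT) auto
  have correct: "received_by E A C s L \<omega> Tf v u" if k: "k \<in> R" and om: "restrict \<omega> (J k) \<in> Succ k" for \<omega> k
  proof -
    obtain c where c: "c \<in> Ch" and cX: "restrict \<omega> (J k) \<in> PiE (J k) (Xs c)"
      using om unfolding Succ_def by blast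
    have Xj: "\<omega> j \<in> Xs c j" if "j \<in> J k" for j
      using cX that by (auto simp: PiE_iff)
    have wu: "\<omega> (u, k) = (c, False)" using Xj[of "(u, k)"] by (simp add: J_def Xs_def)
    have wv: "\<omega> (v, kv k) = (c, True)" using Xj[of "(v, kv k)"] uv by (simp add: J_def Xs_def)
    have ww: "\<omega> (w, m) \<noteq> (c, True)" if "w \<in> Nb" "m \<in> Kw w k" for w m
    proof -
      have "w \<noteq> u" "w \<noteq> v" using that E_irrefl by (auto simp: Nb_def)
      then show ?thesis using Xj[of "(w, m)"] that by (auto simp: J_def Xs_def)
    qed
    have sbT: "sb k \<le> Tf" using sub_u[OF k] sab[of k] Rfr(2)[OF k] by (auto simp: U.fiv_eq)
    show ?thesis unfolding received_by_def
    proof (rule exI[of _ c], rule exI[of _ "sa k"], rule exI[of _ "sb k"], intro conjI)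
      show "sb k \<le> Tf" by (rule sbT)
      show "nbr_on E A u v c" using uvE c by (simp add: nbr_on_def Ch_def)
      show "\<forall>t\<in>{sa k..<sb k}. listens_at C s L \<omega> u c t"
        using sub_u[OF k] wu by (auto simp: listens_at_def)
      show "\<exists>k' j. j < 3 \<and> fst (\<omega> (v, k')) = c \<and> snd (\<omega> (v, k')) \<and> slot_iv (C v) (s v) L k' j \<subseteq> {sa k..<sb k}"
        using jv3[of k] wv slot_eq[of k] by (intro exI[of _ "kv k"] exI[of _ "jv k"]) auto
      show "\<forall>w. nbr_on E A u w c \<and> w \<noteq> v \<longrightarrow> (\<forall>t\<in>{sa k..<sb k}. \<not> transmits_at C s L \<omega> w c t)"
      proof (intro allI impI ballI notI)
        fix w t assume w: "nbr_on E A u w c \<and> w \<noteq> v" and t: "t \<in> {sa k..<sb k}"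
          and tr: "transmits_at C s L \<omega> w c t"
        have wV: "w \<in> V" using w E_in by (auto simp: nbr_on_def)
        have wNb: "w \<in> Nb" using w wV by (auto simp: Nb_def nbr_on_def)
        obtain m j where m: "j < 3" "t \<in> slot_iv (C w) (s w) L m j" "fst (\<omega> (w, m)) = c" "snd (\<omega> (w, m))"
          using tr by (auto simp: transmits_at_def)
        have "t \<in> frame_iv (C w) (s w) L m" using nd.slot_sub_frame[OF nd_x[OF wV] m(1)] m(2) by blast
        then have "m \<in> Kw w k" using t by (auto simp: Kw_def)
        moreover have "\<omega> (w, m) = (c, True)" using m(3,4) by (simp add: prod_eq_iff)
        ultimately show False using ww[OF wNb] by blast
      qed
    qed
  qed
  have subF: "{\<omega> \<in> space M0. \<not> received_by E A C s L \<omega> Tf v u} \<subseteq> F"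
  proof
    fix \<omega> assume \<omega>: "\<omega> \<in> {\<omega> \<in> space M0. \<not> received_by E A C s L \<omega> Tf v u}"
    show "\<omega> \<in> F" unfolding F_def D_def
    proof
      fix k assume k: "k \<in> R"
      have "restrict \<omega> (J k) \<notin> Succ k" using correct[OF k] \<omega> by blast
      moreover have "restrict \<omega> (J k) \<in> space (PiM (J k) MM)" using \<omega> JI[of k]
        by (auto simp: space_PiM)
      ultimately show "\<omega> \<in> prod_emb I0 MM (J k) (space (PiM (J k) MM) - Succ k)"
        using \<omega> by (auto simp: prod_emb_def space_PiM)
    qed
  qed
  have Jchar: "j = (u, k) \<or> (fst j \<noteq> u \<and> fst j \<in> V \<and> frame_iv (C (fst j)) (s (fst j)) L (snd j) \<inter> {sa k..<sb k} \<noteq> {})"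
    if "j \<in> J k" for j k
  proof -
    have "sa k \<in> {sa k..<sb k}" using sab[of k] by simp
    then have "frame_iv (C v) (s v) L (kv k) \<inter> {sa k..<sb k} \<noteq> {}" using sub_v[of k] by blast
    then show ?thesis using that uv vV E_irrefl by (auto simp: J_def Nb_def Kw_def)
  qed
  have far: False if x: "x \<in> V" and k12: "k1 \<in> R" "k2 \<in> R" "k1 + 3 \<le> k2"
    and t1: "t1 \<in> frame_iv (C x) (s x) L m" "t1 \<in> {sa k1..<sb k1}"
    and t2: "t2 \<in> frame_iv (C x) (s x) L m" "t2 \<in> {sa k2..<sb k2}" for x k1 k2 t1 t2 m
  proof -
    have "t1 < U.P (real k1 + 1)" using sub_u[OF k12(1)] t1(2) by (auto simp: U.fiv_eq)
    moreover have "U.P (real k2) \<le> t2" using sub_u[OF k12(2)] t2(2) by (auto simp: U.fiv_eq)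
    moreover have "U.P (real k1 + 3) \<le> U.P (real k2)" by (rule U.P_le) (use k12(3) in simp)
    moreover have "(real k1 + 3 - (real k1 + 1)) * L / (1 + \<delta>) \<le> U.P (real k1 + 3) - U.P (real k1 + 1)"
      by (rule U.P_bounds(1)) simp
    moreover have "t2 - t1 < L / (1 - \<delta>)" by (rule nd.frame_short[OF nd_x[OF x] t1(1) t2(1)])
    moreover have "L / (1 - \<delta>) \<le> 2 * L / (1 + \<delta>)" using dd L_pos delta_le by (simp add: field_simps)
    ultimately show False by simp
  qed
  have disj2: "J k1 \<inter> J k2 = {}" if k12: "k1 \<in> R" "k2 \<in> R" "k1 < k2" for k1 k2
  proof (rule ccontr)
    assume "J k1 \<inter> J k2 \<noteq> {}"
    then obtain j where j1: "j \<in> J k1" and j2: "j \<in> J k2" by blast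
    have sep: "k1 + 3 \<le> k2" by (rule Rsep[OF k12])
    have c1: "fst j \<in> V \<and> frame_iv (C (fst j)) (s (fst j)) L (snd j) \<inter> {sa k1..<sb k1} \<noteq> {}"
      using Jchar[OF j1] Jchar[OF j2] k12(3) by auto
    have c2: "frame_iv (C (fst j)) (s (fst j)) L (snd j) \<inter> {sa k2..<sb k2} \<noteq> {}"
      using Jchar[OF j1] Jchar[OF j2] k12(3) by auto
    obtain t1 where "t1 \<in> frame_iv (C (fst j)) (s (fst j)) L (snd j)" "t1 \<in> {sa k1..<sb k1}"
      using c1 by blast
    moreover obtain t2 where "t2 \<in> frame_iv (C (fst j)) (s (fst j)) L (snd j)" "t2 \<in> {sa k2..<sb k2}"
      using c2 by blast
    ultimately show False using far[OF _ k12(1,2) sep] c1 by blast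
  qed
  have disj: "disjoint_family_on J R"
    unfolding disjoint_family_on_def
  proof (intro ballI impI)
    fix k1 k2 assume "k1 \<in> R" "k2 \<in> R" "k1 \<noteq> k2"
    then show "J k1 \<inter> J k2 = {}" using disj2 by (metis Int_commute linorder_neq_iff)
  qed
  define q where "q = rho / (6 * Mx)"
  have pcompl: "measure_pmf.prob p (UNIV - {a}) = 1 - pmf p a" for p :: "('c \<times> bool) pmf" and a
    by (simp add: measure_pmf.prob_compl[of "{a}", simplified] measure_pmf_single)
  have rect: "1 / (6 * real (card (A u)) * Mx) \<le> measure M0 (prod_emb I0 MM (J k) (PiE (J k) (Xs c)))"
    if c: "c \<in> Ch" for c k
  proof -
    define Sig where "Sig = Sigma Nb (\<lambda>w. Kw w k)"
    have finSig: "finite Sig" unfolding Sig_def using finNb Kw2 by (auto simp: Nb_def intro!: finite_SigmaI)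
    have Jeq: "J k = insert (u, k) (insert (v, kv k) Sig)" by (simp add: J_def Sig_def)
    have nu: "(u, k) \<notin> insert (v, kv k) Sig" using uv E_irrefl by (auto simp: Sig_def Nb_def)
    have nv: "(v, kv k) \<notin> Sig" by (auto simp: Sig_def Nb_def)
    have SigX: "Xs c j = UNIV - {(c, True)}" if "j \<in> Sig" for j
      using that E_irrefl by (auto simp: Sig_def Nb_def Xs_def)
    have cu: "c \<in> A u" and cv: "c \<in> A v" using c by (auto simp: Ch_def)
    have "measure M0 (prod_emb I0 MM (J k) (PiE (J k) (Xs c))) = (\<Prod>j\<in>J k. measure_pmf.prob (pp j) (Xs c j))"
      by (rule rect_prob[OF JI finJ])
    also have "\<dots> = pmf (pp (u, k)) (c, False) * (pmf (pp (v, kv k)) (c, True) *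
                     (\<Prod>j\<in>Sig. 1 - pmf (pp j) (c, True)))"
    proof -
      have pS: "(\<Prod>j\<in>Sig. measure_pmf.prob (pp j) (Xs c j)) = (\<Prod>j\<in>Sig. 1 - pmf (pp j) (c, True))"
        by (rule prod.cong) (simp_all add: SigX pcompl)
      have "(\<Prod>j\<in>J k. measure_pmf.prob (pp j) (Xs c j)) = measure_pmf.prob (pp (u, k)) (Xs c (u, k)) *
          (measure_pmf.prob (pp (v, kv k)) (Xs c (v, kv k)) * (\<Prod>j\<in>Sig. measure_pmf.prob (pp j) (Xs c j)))"
        unfolding Jeq using finSig nu nv by simp
      moreover have e1: "Xs c (u, k) = {(c, False)}" by (simp add: Xs_def)
      moreover have e2: "Xs c (v, kv k) = {(c, True)}" using uv by (simp add: Xs_def)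
      ultimately show ?thesis by (simp only: pS measure_pmf_single)
    qed
    finally have eq: "measure M0 (prod_emb I0 MM (J k) (PiE (J k) (Xs c))) =
        pmf (pp (u, k)) (c, False) * (pmf (pp (v, kv k)) (c, True) * (\<Prod>j\<in>Sig. 1 - pmf (pp j) (c, True)))" .
    have Au: "real (card (A u)) > 0" using card_A_pos[OF uV] by simp
    have Av: "real (card (A v)) > 0" using card_A_pos[OF vV] by simp
    have b1: "1 / (2 * real (card (A u))) \<le> pmf (pp (u, k)) (c, False)"
    proof -
      have "pmf (pp (u, k)) (c, False) = (1 - tx_prob A Dest u) / real (card (A u))" by (rule pmf_F[OF uV cu])
      moreover have "1 / 2 \<le> 1 - tx_prob A Dest u" using tx_le[of u] by simp
      ultimately show ?thesis using Au by (simp add: divide_right_mono field_simps)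
    qed
    have b2: "1 / Mx \<le> pmf (pp (v, kv k)) (c, True)"
    proof -
      have "pmf (pp (v, kv k)) (c, True) = min (1/2) (real (card (A v)) / (3 * real Dest)) / real (card (A v))"
        using pmf_T[OF vV] cv by (simp add: tx_prob_def)
      also have "\<dots> = min (1 / (2 * real (card (A v)))) (1 / (3 * real Dest))"
        using Av by (simp add: min_divide_distrib_right field_simps)
      finally have e: "pmf (pp (v, kv k)) (c, True) = min (1 / (2 * real (card (A v)))) (1 / (3 * real Dest))" .
      have "2 * real (card (A v)) \<le> Mx" using card_A_le[OF vV] unfolding Mx_def by linarith
      moreover have "3 * real Dest \<le> Mx" unfolding Mx_def by simp
      ultimately show ?thesis unfolding e using Av Dest_pos by (simp add: frac_le)
    qed
    define y where "y w = (if c \<in> A w then tx_prob A Dest w / real (card (A w)) else 0)" for w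
    have pj: "pmf (pp j) (c, True) = y (fst j)" if "j \<in> Sig" for j
      using that pmf_T[of "fst j" "snd j" c] by (auto simp: Sig_def Nb_def y_def)
    have y0: "0 \<le> y w" for w using tx_le[of w] by (simp add: y_def)
    have y1: "y w \<le> 1 / (3 * real Dest)" if "w \<in> V" for w
    proof (cases "c \<in> A w")
      case True
      have Aw: "real (card (A w)) > 0" using card_A_pos[OF that] by simp
      have "tx_prob A Dest w \<le> real (card (A w)) / (3 * real Dest)" by (simp add: tx_prob_def)
      then have "tx_prob A Dest w / real (card (A w)) \<le> (real (card (A w)) / (3 * real Dest)) / real (card (A w))"
        using Aw by (intro divide_right_mono) auto
      also have "\<dots> = 1 / (3 * real Dest)" using Aw by simp
      finally show ?thesis using True by (simp add: y_def)
    qed (simp add: y_def)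
    have D31: "1 / (3 * real Dest) \<le> 1" using Dest_pos by (simp add: divide_le_eq)
    have ys1: "y w \<le> 1" if "w \<in> V" for w
      using y1[OF that] D31 by linarith
    have "(\<Sum>j\<in>Sig. pmf (pp j) (c, True)) = (\<Sum>j\<in>Sig. y (fst j))" using pj by simp
    also have "\<dots> = (\<Sum>w\<in>Nb. real (card (Kw w k)) * y w)"
    proof -
      have "(\<Sum>w\<in>Nb. \<Sum>m\<in>Kw w k. y w) = (\<Sum>(w, m)\<in>Sigma Nb (\<lambda>w. Kw w k). y w)"
        by (rule sum.Sigma) (use finNb Kw2 in \<open>auto simp: Nb_def\<close>)
      then show ?thesis unfolding Sig_def by (simp add: case_prod_beta)
    qed
    also have "\<dots> \<le> (\<Sum>w\<in>{w\<in>Nb. c \<in> A w}. 2 * (1 / (3 * real Dest)))"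
    proof -
      have "(\<Sum>w\<in>Nb. real (card (Kw w k)) * y w) = (\<Sum>w\<in>{w\<in>Nb. c \<in> A w}. real (card (Kw w k)) * y w)"
        using finNb by (intro sum.mono_neutral_right) (auto simp: y_def)
      also have "\<dots> \<le> (\<Sum>w\<in>{w\<in>Nb. c \<in> A w}. 2 * (1 / (3 * real Dest)))"
      proof (rule sum_mono)
        fix w assume "w \<in> {w\<in>Nb. c \<in> A w}"
        then have wV: "w \<in> V" by (simp add: Nb_def)
        have "real (card (Kw w k)) \<le> 2" using Kw2[OF wV] by simp
        then show "real (card (Kw w k)) * y w \<le> 2 * (1 / (3 * real Dest))"
          using y0[of w] y1[OF wV] by (intro mult_mono) auto
      qed
      finally show ?thesis .
    qed
    also have "\<dots> = real (card {w\<in>Nb. c \<in> A w}) * (2 / (3 * real Dest))" by simp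
    also have "\<dots> \<le> real Dest * (2 / (3 * real Dest))"
    proof -
      have "{w\<in>Nb. c \<in> A w} \<subseteq> {w\<in>V. nbr_on E A u w c}" using cu by (auto simp: Nb_def nbr_on_def)
      then have "card {w\<in>Nb. c \<in> A w} \<le> deg V E A u c" unfolding deg_def using finV by (intro card_mono) auto
      also have "\<dots> \<le> Dest" by (rule deg_le[OF uV cu])
      finally show ?thesis by (intro mult_right_mono) auto
    qed
    also have "\<dots> = 2 / 3" using Dest_pos by simp
    finally have sumle: "(\<Sum>j\<in>Sig. pmf (pp j) (c, True)) \<le> 2 / 3" .
    have b3: "1 / 3 \<le> (\<Prod>j\<in>Sig. 1 - pmf (pp j) (c, True))"
    proof -
      have "1 - (\<Sum>j\<in>Sig. pmf (pp j) (c, True)) \<le> (\<Prod>j\<in>Sig. 1 - pmf (pp j) (c, True))"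
        by (rule prod_ge_1_minus_sum[OF finSig]) (use pj y0 ys1 in \<open>auto simp: Sig_def Nb_def\<close>)
      then show ?thesis using sumle by linarith
    qed
    have "1 / (6 * real (card (A u)) * Mx) = (1 / (2 * real (card (A u)))) * ((1 / Mx) * (1 / 3))"
      by (simp add: field_simps)
    also have "\<dots> \<le> pmf (pp (u, k)) (c, False) * (pmf (pp (v, kv k)) (c, True) * (\<Prod>j\<in>Sig. 1 - pmf (pp j) (c, True)))"
      using b1 b2 b3 Mx_pos Au by (intro mult_mono) auto
    finally show ?thesis using eq by simp
  qed
  have trial: "q \<le> measure M0 (prod_emb I0 MM (J k) (Succ k))" if "k \<in> R" for k
  proof -
    have h1: "prod_emb I0 MM (J k) (Succ k) = (\<Union>c\<in>Ch. prod_emb I0 MM (J k) (PiE (J k) (Xs c)))"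
      unfolding Succ_def by (rule prod_emb_UN)
    have h2: "measure M0 (\<Union>c\<in>Ch. prod_emb I0 MM (J k) (PiE (J k) (Xs c)))
        = (\<Sum>c\<in>Ch. measure M0 (prod_emb I0 MM (J k) (PiE (J k) (Xs c))))"
    proof (rule finite_measure.finite_measure_finite_Union[OF _ finCh])
      show "finite_measure M0" using psM by (simp add: prob_space_def)
      show "(\<lambda>c. prod_emb I0 MM (J k) (PiE (J k) (Xs c))) ` Ch \<subseteq> sets M0"
        using JI finJ by (auto intro!: measurable_prod_emb sets_PiM_I_finite)
      show "disjoint_family_on (\<lambda>c. prod_emb I0 MM (J k) (PiE (J k) (Xs c))) Ch"
        unfolding disjoint_family_on_def
      proof (intro ballI impI)
        fix c1 c2 assume "c1 \<in> Ch" "c2 \<in> Ch" "c1 \<noteq> c2"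
        have "(u, k) \<in> J k" by (simp add: J_def)
        then show "prod_emb I0 MM (J k) (PiE (J k) (Xs c1)) \<inter> prod_emb I0 MM (J k) (PiE (J k) (Xs c2)) = {}"
        proof (intro equalityI subsetI)
          fix x assume x: "x \<in> prod_emb I0 MM (J k) (PiE (J k) (Xs c1)) \<inter> prod_emb I0 MM (J k) (PiE (J k) (Xs c2))"
          then have "x (u, k) \<in> Xs c1 (u, k)" "x (u, k) \<in> Xs c2 (u, k)" using \<open>(u, k) \<in> J k\<close>
            by (auto simp: prod_emb_def PiE_iff)
          then show "x \<in> {}" using \<open>c1 \<noteq> c2\<close> by (simp add: Xs_def)
        qed auto
      qed
    qed
    have h3: "(\<Sum>c\<in>Ch. 1 / (6 * real (card (A u)) * Mx)) \<le> (\<Sum>c\<in>Ch. measure M0 (prod_emb I0 MM (J k) (PiE (J k) (Xs c))))"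
      by (rule sum_mono) (rule rect)
    have h4: "q \<le> (\<Sum>c\<in>Ch. 1 / (6 * real (card (A u)) * Mx))"
    proof -
      have "rho \<le> real (card Ch) / real (card (A u))" using rho_le[OF vu] by (simp add: Ch_def)
      then have "rho / (6 * Mx) \<le> (real (card Ch) / real (card (A u))) / (6 * Mx)"
        using Mx_pos by (intro divide_right_mono) auto
      then show ?thesis unfolding q_def by (simp add: field_simps)
    qed
    have "measure M0 (prod_emb I0 MM (J k) (Succ k)) = (\<Sum>c\<in>Ch. measure M0 (prod_emb I0 MM (J k) (PiE (J k) (Xs c))))"
      using h1 h2 by simp
    then show ?thesis using h3 h4 by linarith
  qed
  have Dk: "measure M0 (D k) = 1 - measure M0 (prod_emb I0 MM (J k) (Succ k))" for k
  proof -
    have "D k = space M0 - prod_emb I0 MM (J k) (Succ k)"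
      unfolding D_def by (auto simp: prod_emb_def space_PiM PiE_def extensional_def)
    then show ?thesis using D_sets[of k] Succ_sets[of k] JI[of k]
      by (simp add: prob_space.prob_compl[OF psM] measurable_prod_emb)
  qed
  have "measure M0 F = (\<Prod>k\<in>R. measure M0 (D k))"
    unfolding F_def D_def
    by (rule indep_blocks) (use neV finR Rne JI disj Succ_sets in auto)
  also have "\<dots> \<le> (\<Prod>k\<in>R. 1 - q)"
  proof (rule prod_mono)
    fix k assume "k \<in> R"
    show "0 \<le> measure M0 (D k) \<and> measure M0 (D k) \<le> 1 - q"
      using trial[OF \<open>k \<in> R\<close>] Dk[of k] prob_space.prob_le_1[OF psM] by simp
  qed
  also have "\<dots> = (1 - q) ^ card R" by simp
  also have "\<dots> \<le> exp (- q) ^ card R"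
  proof (rule power_mono)
    show "1 - q \<le> exp (- q)" using exp_ge_add_one_self[of "-q"] by simp
    obtain k where "k \<in> R" using Rne by blast
    show "0 \<le> 1 - q" using trial[OF \<open>k \<in> R\<close>] prob_space.prob_le_1[OF psM, of "prod_emb I0 MM (J k) (Succ k)"] by linarith
  qed
  also have "\<dots> = exp (- q * real (card R))" by (simp add: exp_of_nat_mult[symmetric] mult.commute)
  also have "\<dots> \<le> exp (- q * (X / 3))"
  proof -
    have "q \<ge> 0" unfolding q_def using rho_pos[OF vu] Mx_pos by simp
    then have "q * (X / 3) \<le> q * real (card R)" using cardR by (intro mult_left_mono)
    then show ?thesis by simp
  qed
  finally show ?thesis using subF F_sets unfolding q_def by blast
qed

end

context net begin

lemma atom: "Measurable.pred M0 (\<lambda>\<omega>. Q (\<omega> (i :: 'n \<times> nat)))"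
proof (cases "i \<in> I0")
  case True
  then show ?thesis using pred_coord[OF True, where p=pp and Q=Q] by (simp add: pred_def)
next
  case False
  have "{\<omega> \<in> space M0. Q (\<omega> i)} = (if Q undefined then space M0 else {})"
    using False by (cases i) (auto simp: space_PiM PiE_def extensional_def; metis)
  then show ?thesis unfolding pred_def by simp
qed

definition RB :: "real \<Rightarrow> 'n \<Rightarrow> 'n \<Rightarrow> ('n \<times> nat \<Rightarrow> 'c \<times> bool) \<Rightarrow> bool" where
  "RB T v u \<omega> \<longleftrightarrow> (\<exists>c\<in>A u. \<exists>k j.
     (j < 3 \<and> nbr_on E A u v c \<and> nd.P (C v) (s v) L (real k + real (Suc j) / 3) \<le> T \<and>
      (\<forall>t\<in>slot_iv (C v) (s v) L k j. \<exists>m. t \<in> frame_iv (C u) (s u) L m)) \<and>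
     ((fst (\<omega> (v, k)) = c \<and> snd (\<omega> (v, k))) \<and>
      (\<forall>m. frame_iv (C u) (s u) L m \<inter> slot_iv (C v) (s v) L k j \<noteq> {} \<longrightarrow> \<omega> (u, m) = (c, False)) \<and>
      (\<forall>w\<in>V. nbr_on E A u w c \<and> w \<noteq> v \<longrightarrow>
         (\<forall>m j'. j' < 3 \<and> slot_iv (C w) (s w) L m j' \<inter> slot_iv (C v) (s v) L k j \<noteq> {} \<longrightarrow>
            \<not> (fst (\<omega> (w, m)) = c \<and> snd (\<omega> (w, m)))))))"

lemma RB_pred: "Measurable.pred M0 (RB T v u)"
proof -
  have a1: "Measurable.pred M0 (\<lambda>\<omega>. fst (\<omega> (v, k)) = c \<and> snd (\<omega> (v, k)))" for c k
    using atom[where Q="\<lambda>y. fst y = c \<and> snd y" and i="(v, k)"] by simp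
  have a2: "Measurable.pred M0 (\<lambda>\<omega>. \<forall>m. K m \<longrightarrow> \<omega> (u, m) = x)" for K :: "nat \<Rightarrow> bool" and x
  proof (rule pred_intros_countable(1))
    fix m
    show "Measurable.pred M0 (\<lambda>\<omega>. K m \<longrightarrow> \<omega> (u, m) = x)"
    proof (rule pred_intros_imp')
      show "Measurable.pred M0 (\<lambda>\<omega>. \<omega> (u, m) = x)" using atom[where Q="\<lambda>y. y = x" and i="(u, m)"] by simp
    qed
  qed
  have a3: "Measurable.pred M0 (\<lambda>\<omega>. \<forall>w\<in>V. K1 w \<longrightarrow> (\<forall>m j'. K2 w m j' \<longrightarrow> \<not> (fst (\<omega> (w, m)) = c \<and> snd (\<omega> (w, m)))))"
    for K1 and K2 :: "'n \<Rightarrow> nat \<Rightarrow> nat \<Rightarrow> bool" and c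
  proof (rule pred_intros_finite(3)[OF finV])
    fix w assume "w \<in> V"
    show "Measurable.pred M0 (\<lambda>\<omega>. K1 w \<longrightarrow> (\<forall>m j'. K2 w m j' \<longrightarrow> \<not> (fst (\<omega> (w, m)) = c \<and> snd (\<omega> (w, m)))))"
    proof (rule pred_intros_imp')
      show "Measurable.pred M0 (\<lambda>\<omega>. \<forall>m j'. K2 w m j' \<longrightarrow> \<not> (fst (\<omega> (w, m)) = c \<and> snd (\<omega> (w, m))))"
      proof (rule pred_intros_countable(1))
        fix m
        show "Measurable.pred M0 (\<lambda>\<omega>. \<forall>j'. K2 w m j' \<longrightarrow> \<not> (fst (\<omega> (w, m)) = c \<and> snd (\<omega> (w, m))))"
        proof (rule pred_intros_countable(1))
          fix j'
          show "Measurable.pred M0 (\<lambda>\<omega>. K2 w m j' \<longrightarrow> \<not> (fst (\<omega> (w, m)) = c \<and> snd (\<omega> (w, m))))"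
          proof (rule pred_intros_imp')
            show "Measurable.pred M0 (\<lambda>\<omega>. \<not> (fst (\<omega> (w, m)) = c \<and> snd (\<omega> (w, m))))"
              using atom[where Q="\<lambda>y. \<not> (fst y = c \<and> snd y)" and i="(w, m)"] by simp
          qed
        qed
      qed
    qed
  qed
  show ?thesis
  proof (cases "u \<in> V")
    case True
    have fin: "finite (A u)" using chans True by auto
    show ?thesis unfolding RB_def
      apply (rule pred_intros_finite(4)[OF fin])
      apply (rule pred_intros_countable(2))
      apply (rule pred_intros_countable(2))
      apply (rule pred_intros_conj1')
      apply (rule pred_intros_logic(3)[OF a1])
      apply (rule pred_intros_logic(3)[OF a2 a3])
      done
  next
    case False
    then have "RB T v u = (\<lambda>\<omega>. False)" using E_in by (auto simp: RB_def nbr_on_def fun_eq_iff)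
    then show ?thesis by (simp add: pred_def)
  qed
qed

lemma RB_iff:
  assumes vu: "E v u"
  shows "received_by E A C s L \<omega> T v u \<longleftrightarrow> RB T v u \<omega>"
proof -
  have uV: "u \<in> V" and vV: "v \<in> V" using vu E_in by auto
  interpret U: nd "C u" \<delta> "s u" L by (rule nd_x[OF uV])
  interpret W: nd "C v" \<delta> "s v" L by (rule nd_x[OF vV])
  show ?thesis
  proof
    assume "received_by E A C s L \<omega> T v u"
    then obtain c a b k j where b: "b \<le> T" and nb: "nbr_on E A u v c"
      and lis: "\<forall>t\<in>{a..<b}. listens_at C s L \<omega> u c t"
      and j: "j < 3" and vk: "fst (\<omega> (v, k)) = c" "snd (\<omega> (v, k))"
      and sl: "slot_iv (C v) (s v) L k j \<subseteq> {a..<b}"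
      and ntr: "\<forall>w. nbr_on E A u w c \<and> w \<noteq> v \<longrightarrow> (\<forall>t\<in>{a..<b}. \<not> transmits_at C s L \<omega> w c t)"
      unfolding received_by_def by blast
    have lohi: "W.P (real k + real j / 3) < W.P (real k + real (Suc j) / 3)" by (rule W.P_less) simp
    then have "W.P (real k + real j / 3) \<in> slot_iv (C v) (s v) L k j" by (simp add: W.siv_eq)
    have "W.P (real k + real (Suc j) / 3) \<le> b"
    proof (rule ccontr)
      assume "\<not> ?thesis"
      then have "b \<in> slot_iv (C v) (s v) L k j" using sl lohi by (auto simp: W.siv_eq)
      then show False using sl by auto
    qed
    with b have hiT: "W.P (real k + real (Suc j) / 3) \<le> T" by simp
    have cu: "c \<in> A u" using nb by (simp add: nbr_on_def)
    show "RB T v u \<omega>" unfolding RB_def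
    proof (rule bexI[OF _ cu], rule exI[of _ k], rule exI[of _ j], intro conjI allI impI ballI)
      show "j < 3" by fact
      show "nbr_on E A u v c" by fact
      show "W.P (real k + real (Suc j) / 3) \<le> T" by fact
      show "fst (\<omega> (v, k)) = c" "snd (\<omega> (v, k))" by fact+
      fix t assume "t \<in> slot_iv (C v) (s v) L k j"
      then show "\<exists>m. t \<in> frame_iv (C u) (s u) L m" using lis sl by (auto simp: listens_at_def)
    next
      fix m assume "frame_iv (C u) (s u) L m \<inter> slot_iv (C v) (s v) L k j \<noteq> {}"
      then obtain t where t: "t \<in> frame_iv (C u) (s u) L m" "t \<in> slot_iv (C v) (s v) L k j" by blast
      then obtain m' where m': "t \<in> frame_iv (C u) (s u) L m'" "fst (\<omega> (u, m')) = c" "\<not> snd (\<omega> (u, m'))"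
        using lis sl by (auto simp: listens_at_def)
      have "m' = m" by (rule U.frames_disj[OF m'(1) t(1)])
      then show "\<omega> (u, m) = (c, False)" using m' by (simp add: prod_eq_iff)
    next
      fix w m j' assume w: "w \<in> V" "nbr_on E A u w c \<and> w \<noteq> v"
        and m: "j' < 3 \<and> slot_iv (C w) (s w) L m j' \<inter> slot_iv (C v) (s v) L k j \<noteq> {}"
      show "\<not> (fst (\<omega> (w, m)) = c \<and> snd (\<omega> (w, m)))"
      proof
        assume om: "fst (\<omega> (w, m)) = c \<and> snd (\<omega> (w, m))"
        obtain t where t: "t \<in> slot_iv (C w) (s w) L m j'" "t \<in> slot_iv (C v) (s v) L k j" using m by blast
        have "transmits_at C s L \<omega> w c t" unfolding transmits_at_def using m t om by blast
        moreover have "t \<in> {a..<b}" using t sl by blast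
        ultimately show False using ntr w by blast
      qed
    qed
  next
    assume "RB T v u \<omega>"
    then obtain c k j where cu: "c \<in> A u" and j: "j < 3" and nb: "nbr_on E A u v c"
      and hiT: "W.P (real k + real (Suc j) / 3) \<le> T"
      and cov: "\<forall>t\<in>slot_iv (C v) (s v) L k j. \<exists>m. t \<in> frame_iv (C u) (s u) L m"
      and vk: "fst (\<omega> (v, k)) = c" "snd (\<omega> (v, k))"
      and lst: "\<forall>m. frame_iv (C u) (s u) L m \<inter> slot_iv (C v) (s v) L k j \<noteq> {} \<longrightarrow> \<omega> (u, m) = (c, False)"
      and ntr: "\<forall>w\<in>V. nbr_on E A u w c \<and> w \<noteq> v \<longrightarrow>
         (\<forall>m j'. j' < 3 \<and> slot_iv (C w) (s w) L m j' \<inter> slot_iv (C v) (s v) L k j \<noteq> {} \<longrightarrow>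
            \<not> (fst (\<omega> (w, m)) = c \<and> snd (\<omega> (w, m))))"
      unfolding RB_def by blast
    show "received_by E A C s L \<omega> T v u" unfolding received_by_def
    proof (rule exI[of _ c], rule exI[of _ "W.P (real k + real j / 3)"],
        rule exI[of _ "W.P (real k + real (Suc j) / 3)"], intro conjI)
      show "W.P (real k + real (Suc j) / 3) \<le> T" by fact
      show "nbr_on E A u v c" by fact
      show "\<forall>t\<in>{W.P (real k + real j / 3)..<W.P (real k + real (Suc j) / 3)}. listens_at C s L \<omega> u c t"
      proof
        fix t assume t: "t \<in> {W.P (real k + real j / 3)..<W.P (real k + real (Suc j) / 3)}"
        then have ts: "t \<in> slot_iv (C v) (s v) L k j" by (simp add: W.siv_eq)
        then obtain m where m: "t \<in> frame_iv (C u) (s u) L m" using cov by blast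
        then have "\<omega> (u, m) = (c, False)" using lst ts by blast
        then show "listens_at C s L \<omega> u c t" using m unfolding listens_at_def by auto
      qed
      show "\<exists>k' j'. j' < 3 \<and> fst (\<omega> (v, k')) = c \<and> snd (\<omega> (v, k')) \<and>
          slot_iv (C v) (s v) L k' j' \<subseteq> {W.P (real k + real j / 3)..<W.P (real k + real (Suc j) / 3)}"
        using j vk by (intro exI[of _ k] exI[of _ j]) (simp add: W.siv_eq)
      show "\<forall>w. nbr_on E A u w c \<and> w \<noteq> v \<longrightarrow>
          (\<forall>t\<in>{W.P (real k + real j / 3)..<W.P (real k + real (Suc j) / 3)}. \<not> transmits_at C s L \<omega> w c t)"
      proof (intro allI impI ballI notI)
        fix w t assume w: "nbr_on E A u w c \<and> w \<noteq> v"
          and t: "t \<in> {W.P (real k + real j / 3)..<W.P (real k + real (Suc j) / 3)}"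
          and tr: "transmits_at C s L \<omega> w c t"
        have wV: "w \<in> V" using w E_in by (auto simp: nbr_on_def)
        obtain m j' where m: "j' < 3" "t \<in> slot_iv (C w) (s w) L m j'" "fst (\<omega> (w, m)) = c" "snd (\<omega> (w, m))"
          using tr unfolding transmits_at_def by blast
        have "t \<in> slot_iv (C v) (s v) L k j" using t by (simp add: W.siv_eq)
        then have "slot_iv (C w) (s w) L m j' \<inter> slot_iv (C v) (s v) L k j \<noteq> {}" using m(2) by blast
        then show False using ntr wV w m by blast
      qed
    qed
  qed
qed

lemma good_sets: "{\<omega> \<in> space M0. \<forall>u v. E v u \<longrightarrow> received_by E A C s L \<omega> T v u} \<in> sets M0"
proof -
  have "{\<omega> \<in> space M0. \<forall>u v. E v u \<longrightarrow> received_by E A C s L \<omega> T v u}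
      = {\<omega> \<in> space M0. \<forall>u\<in>V. \<forall>v\<in>V. E v u \<longrightarrow> RB T v u \<omega>}"
  proof (rule Collect_cong)
    fix \<omega>
    show "(\<omega> \<in> space M0 \<and> (\<forall>u v. E v u \<longrightarrow> received_by E A C s L \<omega> T v u)) =
          (\<omega> \<in> space M0 \<and> (\<forall>u\<in>V. \<forall>v\<in>V. E v u \<longrightarrow> RB T v u \<omega>))"
    proof (intro conj_cong refl iffI allI impI ballI)
      fix u v assume "\<forall>u v. E v u \<longrightarrow> received_by E A C s L \<omega> T v u" "E v u"
      then show "RB T v u \<omega>" using RB_iff[of v u \<omega> T] by blast
    next
      fix u v assume a: "\<forall>u\<in>V. \<forall>v\<in>V. E v u \<longrightarrow> RB T v u \<omega>" and vu: "E v u"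
      then have "u \<in> V" "v \<in> V" using E_in by auto
      then show "received_by E A C s L \<omega> T v u" using a vu RB_iff[of v u \<omega> T] by blast
    qed
  qed
  also have "\<dots> \<in> sets M0"
  proof -
    have "Measurable.pred M0 (\<lambda>\<omega>. \<forall>u\<in>V. \<forall>v\<in>V. E v u \<longrightarrow> RB T v u \<omega>)"
      by (intro pred_intros_finite(3) finV pred_intros_imp' RB_pred)
    then show ?thesis by (simp only: pred_def)
  qed
  finally show ?thesis .
qed

end

context net begin

lemma main:
  "let N = card V;
         S = max_chan V A;
         \<rho> = min_span_ratio V E A;
         X = 48 * max (2 * real S) (3 * real Dest) / \<rho> * ln (real N ^ 2 / \<epsilon>);
         Tf = Inf {T. \<forall>u \<in> V. real (full_frames_by (C u) (s u) L Ts T) \<ge> X};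
         M = alg_space V A Dest
     in measure M {\<omega> \<in> space M. \<forall>u v. E v u \<longrightarrow> received_by E A C s L \<omega> Tf v u} \<ge> 1 - \<epsilon>"
proof -
  interpret P: prob_space M0 by (rule psM)
  define N where "N = card V"
  define X where "X = 48 * Mx / rho * ln (real N ^ 2 / \<epsilon>)"
  define Tf where "Tf = Inf {T. \<forall>u \<in> V. real (full_frames_by (C u) (s u) L Ts T) \<ge> X}"
  define Good where "Good = {\<omega> \<in> space M0. \<forall>u v. E v u \<longrightarrow> received_by E A C s L \<omega> Tf v u}"
  have Good_sets: "Good \<in> sets M0" unfolding Good_def by (rule good_sets)
  have goal: "1 - \<epsilon> \<le> measure M0 Good"
  proof (cases "\<exists>u v. E v u")
    case False
    then have "Good = space M0" unfolding Good_def by auto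
    then show ?thesis using eps by (simp add: P.prob_space)
  next
    case True
    then obtain u0 v0 where e0: "E v0 u0" by blast
    have u0V: "u0 \<in> V" and v0V: "v0 \<in> V" using e0 E_in by auto
    have "u0 \<noteq> v0" using e0 E_irrefl by auto
    then have "card {u0, v0} \<le> N" unfolding N_def using u0V v0V finV by (intro card_mono) auto
    then have N2: "N \<ge> 2" using \<open>u0 \<noteq> v0\<close> by simp
    have rpos: "rho > 0" by (rule rho_pos[OF e0])
    define l where "l = ln (real N ^ 2 / \<epsilon>)"
    have Neps: "real N ^ 2 / \<epsilon> > 1"
    proof -
      have "real N \<ge> 2" using N2 by simp
      then have "(2::real) ^ 2 \<le> real N ^ 2" by (intro power_mono) auto
      then have "real N ^ 2 \<ge> 4" by simp
      then show ?thesis using eps by (simp add: less_divide_eq)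
    qed
    then have lpos: "l > 0" unfolding l_def by simp
    have Xpos: "X > 0" unfolding X_def l_def[symmetric] using Mx_pos rpos lpos by simp
    have ndu: "u \<in> V \<Longrightarrow> nd (C u) \<delta> L" for u by (rule nd_x)
    have ff: "full_frames_by (C u) (s u) L Ts T = card (nd.KK (C u) (s u) L Ts T)" if "u \<in> V" for u T
      by (simp add: full_frames_by_def nd.KK_def[OF ndu[OF that]])
    have "\<forall>u\<in>V. \<exists>\<theta>. \<forall>T. (X \<le> real (card (nd.KK (C u) (s u) L Ts T)) \<longleftrightarrow> \<theta> \<le> T)"
      using nd.thresh[OF ndu] Ts Xpos by blast
    then obtain \<theta> where th: "\<And>u T. u \<in> V \<Longrightarrow> (X \<le> real (card (nd.KK (C u) (s u) L Ts T)) \<longleftrightarrow> \<theta> u \<le> T)"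
      by metis
    have Tfeq: "Tf = Max (\<theta> ` V)"
    proof -
      have "{T. \<forall>u \<in> V. real (full_frames_by (C u) (s u) L Ts T) \<ge> X} = {T. \<forall>u\<in>V. \<theta> u \<le> T}"
        using th ff by auto
      moreover have "Inf {T. \<forall>u\<in>V. \<theta> u \<le> T} = Max (\<theta> ` V)"
        by (rule cInf_eq_minimum) (use finV neV in auto)
      ultimately show ?thesis unfolding Tf_def by simp
    qed
    have full: "X \<le> real (card (nd.KK (C u) (s u) L Ts Tf))" if "u \<in> V" for u
      using th[OF that] that finV Tfeq by auto
    define Lk where "Lk = {(v, u). v \<in> V \<and> u \<in> V \<and> E v u}"
    have "Lk \<subseteq> V \<times> V" by (auto simp: Lk_def)
    then have finLk: "finite Lk" using finV finite_subset by blast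
    have cardLk: "card Lk \<le> N ^ 2"
    proof -
      have "card Lk \<le> card (V \<times> V)" using finV by (intro card_mono) (auto simp: Lk_def)
      then show ?thesis by (simp add: N_def card_cartesian_product power2_eq_square)
    qed
    have "\<forall>p\<in>Lk. \<exists>F. F \<in> sets M0 \<and> {\<omega> \<in> space M0. \<not> received_by E A C s L \<omega> Tf (fst p) (snd p)} \<subseteq> F
           \<and> measure M0 F \<le> exp (- (rho / (6 * Mx)) * (X / 3))"
    proof
      fix p assume "p \<in> Lk"
      then obtain v u where p: "p = (v, u)" "E v u" "u \<in> V" by (auto simp: Lk_def)
      show "\<exists>F. F \<in> sets M0 \<and> {\<omega> \<in> space M0. \<not> received_by E A C s L \<omega> Tf (fst p) (snd p)} \<subseteq> F
           \<and> measure M0 F \<le> exp (- (rho / (6 * Mx)) * (X / 3))"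
        using link_bound[OF p(2) Xpos full[OF p(3)]] unfolding p(1) fst_conv snd_conv by blast
    qed
    from bchoice[OF this] obtain F where F0: "\<forall>p\<in>Lk. F p \<in> sets M0 \<and> {\<omega> \<in> space M0. \<not> received_by E A C s L \<omega> Tf (fst p) (snd p)} \<subseteq> F p
           \<and> measure M0 (F p) \<le> exp (- (rho / (6 * Mx)) * (X / 3))" by blast
    have F: "\<And>p. p \<in> Lk \<Longrightarrow> F p \<in> sets M0"
      "\<And>p. p \<in> Lk \<Longrightarrow> {\<omega> \<in> space M0. \<not> received_by E A C s L \<omega> Tf (fst p) (snd p)} \<subseteq> F p"
      "\<And>p. p \<in> Lk \<Longrightarrow> measure M0 (F p) \<le> exp (- (rho / (6 * Mx)) * (X / 3))"
      using F0 by auto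
    have eb: "exp (- (rho / (6 * Mx)) * (X / 3)) \<le> \<epsilon> / real N ^ 2"
    proof -
      have "(rho / (6 * Mx)) * (X / 3) = 8 / 3 * l"
        unfolding X_def l_def[symmetric] using rpos Mx_pos by (simp add: field_simps)
      then have "- (rho / (6 * Mx)) * (X / 3) \<le> - l" using lpos by (simp only: mult_minus_left)
      then have "exp (- (rho / (6 * Mx)) * (X / 3)) \<le> exp (- l)" by simp
      also have "exp (- l) = \<epsilon> / real N ^ 2"
      proof -
        have "exp l = real N ^ 2 / \<epsilon>" unfolding l_def using Neps by simp
        then show ?thesis by (simp add: exp_minus)
      qed
      finally show ?thesis .
    qed
    have sub: "space M0 - Good \<subseteq> (\<Union>p\<in>Lk. F p)"
    proof
      fix \<omega> assume "\<omega> \<in> space M0 - Good"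
      then obtain u v where "E v u" "\<not> received_by E A C s L \<omega> Tf v u" "\<omega> \<in> space M0"
        unfolding Good_def by auto
      moreover then have "(v, u) \<in> Lk" using E_in by (auto simp: Lk_def)
      ultimately show "\<omega> \<in> (\<Union>p\<in>Lk. F p)" using F(2)[of "(v, u)"] by auto
    qed
    have "measure M0 (space M0 - Good) \<le> measure M0 (\<Union>p\<in>Lk. F p)"
      by (rule P.finite_measure_mono[OF sub]) (use finLk F(1) in auto)
    also have "\<dots> \<le> (\<Sum>p\<in>Lk. measure M0 (F p))"
      by (rule P.finite_measure_subadditive_finite) (use finLk F(1) in auto)
    also have "\<dots> \<le> (\<Sum>p\<in>Lk. \<epsilon> / real N ^ 2)"
      by (rule sum_mono) (use F(3) eb in force)
    also have "\<dots> = real (card Lk) * (\<epsilon> / real N ^ 2)" by simp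
    also have "\<dots> \<le> real N ^ 2 * (\<epsilon> / real N ^ 2)"
      using cardLk eps by (intro mult_right_mono) (auto simp: of_nat_power[symmetric] simp del: of_nat_power)
    also have "\<dots> = \<epsilon>" using N2 by simp
    finally have "measure M0 (space M0 - Good) \<le> \<epsilon>" .
    then show ?thesis using P.prob_compl[OF Good_sets] by simp
  qed
  show ?thesis unfolding Let_def alg_eq
    using goal unfolding Good_def Tf_def X_def N_def Mx_def rho_def by simp
qed

end

theorem mainTheorem6:
  fixes V :: "'n set" and A :: "'n \<Rightarrow> 'c set" and E :: "'n \<Rightarrow> 'n \<Rightarrow> bool"
    and C :: "'n \<Rightarrow> real \<Rightarrow> real" and s :: "'n \<Rightarrow> real"
    and L \<delta> \<epsilon> Ts :: real and Dest :: nat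
  assumes finV: "finite V" and neV: "V \<noteq> {}"
    and chans: "\<forall>u \<in> V. finite (A u) \<and> A u \<noteq> {}"
    and E_in: "\<forall>u v. E u v \<longrightarrow> u \<in> V \<and> v \<in> V"
    and E_sym: "\<forall>u v. E u v \<longrightarrow> E v u"
    and E_irrefl: "\<forall>u. \<not> E u u"
    and E_common: "\<forall>u v. E u v \<longrightarrow> A u \<inter> A v \<noteq> {}"
    and Dest_pos: "Dest > 0"
    and Dest_ge: "max_deg V E A \<le> Dest"
    and clock: "\<forall>u \<in> V. \<forall>t d. d \<ge> 0 \<longrightarrow>
                  (1 - \<delta>) * d \<le> C u (t + d) - C u t \<and> C u (t + d) - C u t \<le> (1 + \<delta>) * d"
    and delta_le: "\<delta> \<le> 1/7"
    and L_pos: "L > 0"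
    and eps: "0 < \<epsilon>" "\<epsilon> < 1"
    and Ts: "\<forall>u \<in> V. s u \<le> Ts"
  shows
    "let N = card V;
         S = max_chan V A;
         \<rho> = min_span_ratio V E A;
         X = 48 * max (2 * real S) (3 * real Dest) / \<rho> * ln (real N ^ 2 / \<epsilon>);
         Tf = Inf {T. \<forall>u \<in> V. real (full_frames_by (C u) (s u) L Ts T) \<ge> X};
         M = alg_space V A Dest
     in measure M {\<omega> \<in> space M. \<forall>u v. E v u \<longrightarrow> received_by E A C s L \<omega> Tf v u} \<ge> 1 - \<epsilon>"
  proof -
  have "net V A E C s L \<delta> \<epsilon> Ts Dest"
    unfolding net_def using assms by blast
  then show ?thesis by (rule net.main)
qed

end
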